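(* Let $\epsilon$ and $\epsilon'$ be two sign assignments on a poset $(S,\triangleleft)$. If $\mathrm H^1_{\rm CW}(\mathscr K(S,\triangleleft);\mathbb Z_2)=0$, then there is an isomorphism of sign assignments from $\epsilon$ to $\epsilon'$, i.e. a map $\eta\colon S\to\mathbb Z_2$ such that $\eta(x)+\epsilon'_{x,y}\equiv\epsilon_{x,y}+\eta(y)\pmod 2$ for all covering pairs $x\,\tilde\triangleleft\,y$.
   Context: In a poset, $x\,\tilde\triangleleft\,y$ ($y$ covers $x$) means $x\triangleleft y$ with no element strictly between. A square consists of $x,y,y',z$ with $y\neq y'$, $x\,\tilde\triangleleft\,y\,\tilde\triangleleft\,z$ and $x\,\tilde\triangleleft\,y'\,\tilde\triangleleft\,z$. A sign assignment assigns $\epsilon_{x,y}\in\mathbb Z_2$ to each covering pair such that $\epsilon_{x,y}+\epsilon_{y,z}\equiv\epsilon_{x,y'}+\epsilon_{y',z}+1\pmod 2$ for every square. $\mathscr K(S,\triangleleft)$ is the CW-complex obtained from the geometric realization of the Hasse graph of $S$ (vertices the elements of $S$, an edge for each covering pair) by attaching a $2$-cell along each square; $\mathrm H^*_{\rm CW}(-;\mathbb Z_2)$ is its cellular cohomology with $\mathbb Z_2$ coefficients. *)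

theory Defs
  imports Main "HOL-Library.Z2"
begin

definition covers :: "'a::order \<Rightarrow> 'a \<Rightarrow> bool" where
  "covers x y \<longleftrightarrow> x < y \<and> \<not> (\<exists>w. x < w \<and> w < y)"

definition is_square :: "'a::order \<Rightarrow> 'a \<Rightarrow> 'a \<Rightarrow> 'a \<Rightarrow> bool" where
  "is_square x y y' z \<longleftrightarrow> y \<noteq> y' \<and> covers x y \<and> covers y z \<and> covers x y' \<and> covers y' z"

definition sign_assignment :: "('a::order \<Rightarrow> 'a \<Rightarrow> bit) \<Rightarrow> bool" where
  "sign_assignment \<epsilon> \<longleftrightarrow>
     (\<forall>x y y' z. is_square x y y' z \<longrightarrow> \<epsilon> x y + \<epsilon> y z = \<epsilon> x y' + \<epsilon> y' z + 1)"

text \<open>Cellular cochain complex of K(S) with Z_2 coefficients, in degrees 0,1,2.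
0-cells = elements, 1-cells = covering pairs, 2-cells = squares.
A 0-cochain is any function on elements; a 1-cochain is a function on covering pairs
(represented as a function 'a => 'a => bit vanishing off covering pairs);
a 2-cochain is a function on squares (vanishing off squares).
Over Z_2 orientations are irrelevant.\<close>

definition cochains1 :: "('a::order \<Rightarrow> 'a \<Rightarrow> bit) set" where
  "cochains1 = {c. \<forall>x y. \<not> covers x y \<longrightarrow> c x y = 0}"

definition cobdry0 :: "('a::order \<Rightarrow> bit) \<Rightarrow> ('a \<Rightarrow> 'a \<Rightarrow> bit)" where
  "cobdry0 f = (\<lambda>x y. if covers x y then f x + f y else 0)"

definition cobdry1 :: "('a::order \<Rightarrow> 'a \<Rightarrow> bit) \<Rightarrow> ('a \<Rightarrow> 'a \<Rightarrow> 'a \<Rightarrow> 'a \<Rightarrow> bit)" where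
  "cobdry1 c = (\<lambda>x y y' z. if is_square x y y' z then c x y + c y z + c x y' + c y' z else 0)"

definition cocycles1 :: "('a::order \<Rightarrow> 'a \<Rightarrow> bit) set" where
  "cocycles1 = {c \<in> cochains1. cobdry1 c = (\<lambda>_ _ _ _. 0)}"

definition coboundaries1 :: "('a::order \<Rightarrow> 'a \<Rightarrow> bit) set" where
  "coboundaries1 = range cobdry0"

definition cellular_H1 :: "('a::order \<Rightarrow> 'a \<Rightarrow> bit) set set" where
  "cellular_H1 = cocycles1 // {(c, d). c \<in> cocycles1 \<and> d \<in> cocycles1 \<and> c - d \<in> coboundaries1}"

definition cellular_H1_zero :: "'a::order itself \<Rightarrow> bool" where
  "cellular_H1_zero _ \<longleftrightarrow> (cellular_H1 :: ('a \<Rightarrow> 'a \<Rightarrow> bit) set set) = {coboundaries1}"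

end

theory Submission
  imports Defs
begin

lemma bit_add_self: "(a::bit) + a = 0"
  by (cases a) simp_all

lemma sq_lemma:
  fixes a b c d p q r t :: bit
  assumes "a + b = c + d + 1" "p + q = r + t + 1"
  shows "(a + b) + (p + q) + c + d + r + t = 0"
  using assms by (cases a; cases b; cases c; cases d; cases p; cases q; cases r; cases t) simp_all

theorem proposition3p14:
  fixes \<epsilon> \<epsilon>' :: "'a::order \<Rightarrow> 'a \<Rightarrow> bit"
  assumes "sign_assignment \<epsilon>" and "sign_assignment \<epsilon>'"
    and "cellular_H1_zero TYPE('a)"
  shows "\<exists>\<eta> :: 'a \<Rightarrow> bit. \<forall>x y. covers x y \<longrightarrow> \<eta> x + \<epsilon>' x y = \<epsilon> x y + \<eta> y"
proof -
  define c where "c = (\<lambda>x y. if covers x y then \<epsilon> x y + \<epsilon>' x y else (0::bit))"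
  have cc: "c \<in> cochains1" unfolding cochains1_def c_def by auto
  have "cobdry1 c = (\<lambda>_ _ _ _. 0)"
  proof (intro ext)
    fix x y y' z :: 'a
    show "cobdry1 c x y y' z = 0"
    proof (cases "is_square x y y' z")
      case True
      have e1: "\<epsilon> x y + \<epsilon> y z = \<epsilon> x y' + \<epsilon> y' z + 1" using assms(1) True
        unfolding sign_assignment_def by blast
      have e2: "\<epsilon>' x y + \<epsilon>' y z = \<epsilon>' x y' + \<epsilon>' y' z + 1" using assms(2) True
        unfolding sign_assignment_def by blast
      have cv: "covers x y" "covers y z" "covers x y'" "covers y' z"
        using True unfolding is_square_def by auto
      have "cobdry1 c x y y' z = (\<epsilon> x y + \<epsilon> y z) + (\<epsilon>' x y + \<epsilon>' y z)
          + \<epsilon> x y' + \<epsilon> y' z + \<epsilon>' x y' + \<epsilon>' y' z"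
        unfolding cobdry1_def c_def by (simp only: True cv if_True ac_simps)
      also have "\<dots> = 0" using e1 e2 by (rule sq_lemma)
      finally show ?thesis .
    qed (simp add: cobdry1_def)
  qed
  hence ccy: "c \<in> cocycles1" using cc unfolding cocycles1_def by auto
  define R where "R = {(c, d). c \<in> cocycles1 \<and> d \<in> cocycles1 \<and> c - d \<in> (coboundaries1 :: ('a \<Rightarrow> 'a \<Rightarrow> bit) set)}"
  have "R `` {c} \<in> cellular_H1" unfolding cellular_H1_def R_def[symmetric]
    using ccy by (rule quotientI)
  hence eq: "R `` {c} = coboundaries1" using assms(3) unfolding cellular_H1_zero_def by auto
  have "c - c = cobdry0 (\<lambda>_. 0)" by (auto simp: cobdry0_def fun_eq_iff c_def)
  hence "(c, c) \<in> R" unfolding R_def coboundaries1_def using ccy by auto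
  hence "c \<in> coboundaries1" using eq by auto
  then obtain f where f: "c = cobdry0 f" unfolding coboundaries1_def by auto
  show ?thesis
  proof (intro exI allI impI)
    fix x y :: 'a assume cv: "covers x y"
    have "\<epsilon> x y + \<epsilon>' x y = f x + f y" using fun_cong[OF fun_cong[OF f, of x], of y] cv
      by (simp add: c_def cobdry0_def)
    thus "f x + \<epsilon>' x y = \<epsilon> x y + f y"
      by (cases "f x"; cases "f y"; cases "\<epsilon> x y"; cases "\<epsilon>' x y") simp_all
  qed
qed

end
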